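(* Consider the quadratic finite-horizon dynamic multi-agent system described in the context, with constants $\gamma,\alpha,\beta,\rho>0$ such that $\|\mathbf x_i(0)\|\le\gamma$, $\|\mathbf A_i\|\le\alpha$, $\|\mathbf B_i\|\le\beta$ and $\mathbf H_i\succeq\rho\mathbf I$ for all $i\in\mathcal V$, and assume $C(t)>0$ for all $t\in\mathcal T$. Let $\lambda^\dagger>0$ and let $\delta_{\max}>0$ satisfy $$\delta_{\max}\sum_{t=1}^{N}\gamma\,\alpha^{2t-1}\le\frac{\sqrt{C(0)\rho}}{n\beta}\lambda^\dagger,$$ and, for every $k\in\mathcal T$ with $k\neq0$, $$\delta_{\max}\sum_{t=k+1}^{N}\Big[\gamma\,\alpha^{2t-k-1}+\beta\sum_{j=0}^{k-1}\sqrt{\tfrac{C(j)}{\rho}}\;\alpha^{2t-j-k-2}\Big]\le\frac{\sqrt{C(k)\rho}}{n\beta}\lambda^\dagger.$$ Then for every choice of symmetric positive definite matrices $\mathbf Q_i,\mathbf R_i$ ($i\in\mathcal V$) with $\|\mathbf Q_i\|\le\delta_{\max}$, every competitive equilibrium $(\boldsymbol\lambda^\ast,\mathbf U^\ast,\mathbf E^\ast)$ satisfies $\lambda^\ast_t\le\lambda^\dagger$ for all $t\in\mathcal T$.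
   Context: Finite-horizon dynamic multi-agent system: $n$ agents $\mathcal V=\{1,\dots,n\}$, horizon $N\ge1$, $\mathcal T=\{0,\dots,N-1\}$. Agent $i$ has state $\mathbf x_i(t)\in\mathbb R^d$, input $\mathbf u_i(t)\in\mathbb R^m$, dynamics $\mathbf x_i(t+1)=\mathbf A_i\mathbf x_i(t)+\mathbf B_i\mathbf u_i(t)$ with given $\mathbf x_i(0)$, excess resource $a_i(t)\in\mathbb R$, and $C(t)=\sum_{i=1}^na_i(t)$. Quadratic case: agent $i$'s parameter is $\theta_i=(\mathbf Q_i,\mathbf R_i)$ with $\mathbf Q_i\in\mathbb R^{d\times d}$, $\mathbf R_i\in\mathbb R^{m\times m}$ symmetric positive definite; running utility $f(\mathbf x,\mathbf u;\theta_i)=-\mathbf x^\top\mathbf Q_i\mathbf x-\mathbf u^\top\mathbf R_i\mathbf u$; terminal utility $\phi(\mathbf x;\theta_i)=-\mathbf x^\top\mathbf Q_i\mathbf x$; consumption $h_i(\mathbf u)=\mathbf u^\top\mathbf H_i\mathbf u$ with $\mathbf H_i$ symmetric positive definite. Norms are Euclidean / induced operator norms. A competitive equilibrium is a triple $(\boldsymbol\lambda^\ast,\mathbf U^\ast,\mathbf E^\ast)$, $\boldsymbol\lambda^\ast=(\lambda^\ast_0,\dots,\lambda^\ast_{N-1})\in\mathbb R^N$, such that (i) for each $i\in\mathcal V$, $(\mathbf U_i^\ast,\mathbf E_i^\ast)=((\mathbf u_i^\ast(t))_{t\in\mathcal T},(e_i^\ast(t))_{t\in\mathcal T})$ is a maximizer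 of $\phi(\mathbf x_i(N);\theta_i)+\sum_{t=0}^{N-1}\big(f(\mathbf x_i(t),\mathbf u_i(t);\theta_i)+\lambda^\ast_t e_i(t)\big)$ over all inputs $\mathbf u_i(t)\in\mathbb R^m$ and trades $e_i(t)\in\mathbb R$ subject to the dynamics and $e_i(t)\le a_i(t)-h_i(\mathbf u_i(t))$ for all $t\in\mathcal T$; and (ii) $\sum_{i=1}^ne_i^\ast(t)=0$ for all $t\in\mathcal T$. *)

theory Defs
  imports "HOL-Analysis.Analysis"
begin

definition sym_pd :: "real^'k^'k \<Rightarrow> bool" where
  "sym_pd M \<longleftrightarrow> transpose M = M \<and> (\<forall>x. x \<noteq> 0 \<longrightarrow> x \<bullet> (M *v x) > 0)"

definition mat_opnorm :: "real^'k^'l \<Rightarrow> real" where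
  "mat_opnorm M = onorm (\<lambda>x. M *v x)"

fun traj :: "real^'d \<Rightarrow> real^'d^'d \<Rightarrow> real^'m^'d \<Rightarrow> (nat \<Rightarrow> real^'m) \<Rightarrow> nat \<Rightarrow> real^'d" where
  "traj x0 A B u 0 = x0"
| "traj x0 A B u (Suc t) = A *v traj x0 A B u t + B *v u t"

definition f_run :: "real^'d \<Rightarrow> real^'m \<Rightarrow> real^'d^'d \<Rightarrow> real^'m^'m \<Rightarrow> real" where
  "f_run x u Q R = - (x \<bullet> (Q *v x)) - (u \<bullet> (R *v u))"

definition phi_term :: "real^'d \<Rightarrow> real^'d^'d \<Rightarrow> real" where
  "phi_term x Q = - (x \<bullet> (Q *v x))"

definition consump :: "real^'m^'m \<Rightarrow> real^'m \<Rightarrow> real" where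
  "consump H u = u \<bullet> (H *v u)"

definition agent_obj ::
  "nat \<Rightarrow> real^'d \<Rightarrow> real^'d^'d \<Rightarrow> real^'m^'d \<Rightarrow> real^'d^'d \<Rightarrow> real^'m^'m
   \<Rightarrow> (nat \<Rightarrow> real) \<Rightarrow> (nat \<Rightarrow> real^'m) \<Rightarrow> (nat \<Rightarrow> real) \<Rightarrow> real" where
  "agent_obj N x0 A B Q R lam u e =
     phi_term (traj x0 A B u N) Q
     + (\<Sum>t<N. f_run (traj x0 A B u t) (u t) Q R + lam t * e t)"

definition agent_feasible ::
  "nat \<Rightarrow> real^'m^'m \<Rightarrow> (nat \<Rightarrow> real) \<Rightarrow> (nat \<Rightarrow> real^'m) \<Rightarrow> (nat \<Rightarrow> real) \<Rightarrow> bool" where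
  "agent_feasible N H a u e \<longleftrightarrow> (\<forall>t<N. e t \<le> a t - consump H (u t))"

(* competitive equilibrium; agents indexed 0..n-1, times 0..N-1 *)
definition competitive_equilibrium ::
  "nat \<Rightarrow> nat \<Rightarrow> (nat \<Rightarrow> real^'d) \<Rightarrow> (nat \<Rightarrow> real^'d^'d) \<Rightarrow> (nat \<Rightarrow> real^'m^'d)
   \<Rightarrow> (nat \<Rightarrow> real^'d^'d) \<Rightarrow> (nat \<Rightarrow> real^'m^'m) \<Rightarrow> (nat \<Rightarrow> real^'m^'m)
   \<Rightarrow> (nat \<Rightarrow> nat \<Rightarrow> real)
   \<Rightarrow> (nat \<Rightarrow> real) \<Rightarrow> (nat \<Rightarrow> nat \<Rightarrow> real^'m) \<Rightarrow> (nat \<Rightarrow> nat \<Rightarrow> real) \<Rightarrow> bool" where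
  "competitive_equilibrium n N x0 A B Q R H a lam U E \<longleftrightarrow>
     (\<forall>i<n. agent_feasible N (H i) (a i) (U i) (E i) \<and>
        (\<forall>u e. agent_feasible N (H i) (a i) u e \<longrightarrow>
           agent_obj N (x0 i) (A i) (B i) (Q i) (R i) lam u e
             \<le> agent_obj N (x0 i) (A i) (B i) (Q i) (R i) lam (U i) (E i)))
     \<and> (\<forall>t<N. (\<Sum>i<n. E i t) = 0)"

end

theory Submission
  imports Defs
begin


definition qf :: "real^'k^'k \<Rightarrow> real^'k \<Rightarrow> real" where
  "qf M v = v \<bullet> (M *v v)"

lemma sym_inner: "transpose Q = Q \<Longrightarrow> x \<bullet> (Q *v y) = y \<bullet> (Q *v (x::real^'n))"
  by (metis dot_lmul_matrix inner_commute vector_transpose_matrix)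

lemma traj_add: "traj (x1 + x2) A B (\<lambda>j. u1 j + u2 j) t = traj x1 A B u1 t + traj x2 A B u2 t"
  by (induction t) (simp_all add: matrix_vector_right_distrib algebra_simps)

lemma traj_diff: "traj x A B (\<lambda>j. u j - c *\<^sub>R v j) t = traj x A B u t - c *\<^sub>R traj 0 A B v t"
proof (induction t)
  case 0 then show ?case by simp
next
  case (Suc t)
  show ?case by (simp only: traj.simps Suc.IH)
     (simp add: matrix_vector_mult_diff_distrib matrix_vector_mult_scaleR
      matrix_vector_right_distrib algebra_simps)
qed

lemma traj_zero: "(\<forall>j<t. v j = 0) \<Longrightarrow> traj 0 A B v t = 0"
  by (induction t) simp_all

lemma traj_cong: "(\<forall>j<t. u j = u' j) \<Longrightarrow> traj x A B u t = traj x A B u' t"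
  by (induction t) simp_all

lemma qf_diff:
  assumes "transpose M = M"
  shows "qf M (p - s *\<^sub>R q) = qf M p - 2 * s * (q \<bullet> (M *v p)) + s^2 * qf M q"
  using sym_inner[OF assms, of p q]
  by (simp add: qf_def matrix_vector_mult_diff_distrib matrix_vector_mult_scaleR
      inner_diff_left inner_diff_right algebra_simps power2_eq_square)

definition Fc where
  "Fc N x0 A B Q R H lam u =
     (\<Sum>t\<le>N. qf Q (traj x0 A B u t)) + (\<Sum>t<N. qf R (u t) + lam t * qf H (u t))"

lemma obj_rel:
  "agent_obj N x0 A B Q R lam u e =
     - Fc N x0 A B Q R H lam u + (\<Sum>t<N. lam t * (e t + consump H (u t)))"
  unfolding agent_obj_def Fc_def phi_term_def f_run_def consump_def qf_def
  by (simp add: lessThan_Suc_atMost[symmetric] sum.distrib sum_subtractf algebra_simps)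

lemma opt_Fc:
  assumes feas: "agent_feasible N H a u e"
    and opt: "\<forall>u' e'. agent_feasible N H a u' e' \<longrightarrow>
                agent_obj N x0 A B Q R lam u' e' \<le> agent_obj N x0 A B Q R lam u e"
  shows "Fc N x0 A B Q R H lam u \<le> Fc N x0 A B Q R H lam u'"
proof -
  define e' where "e' = (\<lambda>t. e t + consump H (u t) - consump H (u' t))"
  have "agent_feasible N H a u' e'" using feas unfolding agent_feasible_def e'_def by auto
  then have "agent_obj N x0 A B Q R lam u' e' \<le> agent_obj N x0 A B Q R lam u e" using opt by blast
  moreover have "(\<Sum>t<N. lam t * (e' t + consump H (u' t))) = (\<Sum>t<N. lam t * (e t + consump H (u t)))"
    unfolding e'_def by simp
  ultimately show ?thesis by (simp add: obj_rel[where H=H])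
qed

lemma lam_nonneg:
  assumes feas: "agent_feasible N H a u e"
    and opt: "\<forall>u' e'. agent_feasible N H a u' e' \<longrightarrow>
                agent_obj N x0 A B Q R lam u' e' \<le> agent_obj N x0 A B Q R lam u e"
    and j: "j < N"
  shows "lam j \<ge> 0"
proof -
  define e' where "e' = e(j := e j - 1)"
  have "agent_feasible N H a u e'" using feas unfolding agent_feasible_def e'_def by auto
  then have le: "agent_obj N x0 A B Q R lam u e' \<le> agent_obj N x0 A B Q R lam u e" using opt by blast
  have "(\<Sum>t<N. lam t * e' t) = (\<Sum>t<N. lam t * e t) - lam j"
  proof -
    have "(\<Sum>t<N. lam t * e' t) = (\<Sum>t<N. lam t * e t - (if t = j then lam j else 0))"
      unfolding e'_def by (rule sum.cong) (auto simp: algebra_simps)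
    also have "\<dots> = (\<Sum>t<N. lam t * e t) - lam j" using j by (simp add: sum_subtractf)
    finally show ?thesis .
  qed
  then show ?thesis using le unfolding agent_obj_def by (simp add: sum.distrib)
qed

lemma slack_tight:
  assumes feas: "agent_feasible N H a u e"
    and opt: "\<forall>u' e'. agent_feasible N H a u' e' \<longrightarrow>
                agent_obj N x0 A B Q R lam u' e' \<le> agent_obj N x0 A B Q R lam u e"
    and j: "j < N" and pos: "lam j > 0"
  shows "e j = a j - consump H (u j)"
proof (rule ccontr)
  assume ne: "e j \<noteq> a j - consump H (u j)"
  define s where "s = a j - consump H (u j) - e j"
  have s: "s > 0" using ne feas j unfolding agent_feasible_def s_def by force
  define e' where "e' = e(j := e j + s)"
  have "agent_feasible N H a u e'" using feas unfolding agent_feasible_def e'_def s_def by auto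
  then have le: "agent_obj N x0 A B Q R lam u e' \<le> agent_obj N x0 A B Q R lam u e" using opt by blast
  have "(\<Sum>t<N. lam t * e' t) = (\<Sum>t<N. lam t * e t + (if t = j then lam j * s else 0))"
    unfolding e'_def by (rule sum.cong) (auto simp: algebra_simps)
  also have "\<dots> = (\<Sum>t<N. lam t * e t) + lam j * s" using j by (simp add: sum.distrib)
  finally have "(\<Sum>t<N. lam t * e' t) = (\<Sum>t<N. lam t * e t) + lam j * s" .
  then have "lam j * s \<le> 0" using le unfolding agent_obj_def by (simp add: sum.distrib)
  moreover have "lam j * s > 0" using s pos by simp
  ultimately show False by linarith
qed




lemma Fc_dir:
  assumes sQ: "transpose Q = Q" and sR: "transpose R = R" and sH: "transpose H = H"
  shows "Fc N x0 A B Q R H lam (\<lambda>j. u j - s *\<^sub>R v j) = Fc N x0 A B Q R H lam u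
     - 2 * s * ((\<Sum>t\<le>N. traj 0 A B v t \<bullet> (Q *v traj x0 A B u t))
               + (\<Sum>t<N. v t \<bullet> (R *v u t) + lam t * (v t \<bullet> (H *v u t))))
     + s^2 * ((\<Sum>t\<le>N. qf Q (traj 0 A B v t)) + (\<Sum>t<N. qf R (v t) + lam t * qf H (v t)))"
  unfolding Fc_def traj_diff qf_diff[OF sQ] qf_diff[OF sR] qf_diff[OF sH]
  by (simp add: sum.distrib sum_subtractf sum_distrib_left algebra_simps)

lemma foc_real:
  fixes L K :: real
  assumes "\<forall>s>0. 0 \<le> - 2 * s * L + s^2 * K"
  shows "L \<le> 0"
proof (rule ccontr)
  assume "\<not> L \<le> 0"
  then have L: "L > 0" by simp
  define s where "s = L / (\<bar>K\<bar> + 1)"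
  have s: "s > 0" using L by (simp add: s_def)
  have "s * \<bar>K\<bar> < L"
  proof -
    have "s * \<bar>K\<bar> = L * (\<bar>K\<bar> / (\<bar>K\<bar> + 1))" by (simp add: s_def)
    also have "\<dots> < L * 1" using L by (intro mult_strict_left_mono) auto
    finally show ?thesis by simp
  qed
  then have "s * K < L" by (smt (verit) s mult_left_mono abs_ge_self)
  then have "- 2 * s * L + s^2 * K = s * (s * K - 2 * L)" by (simp add: power2_eq_square algebra_simps)
  moreover have "s * (s * K - 2 * L) < 0" using s \<open>s * K < L\<close> L by (simp add: mult_pos_neg)
  ultimately show False using assms s by fastforce
qed

lemma dir_foc:
  assumes sQ: "transpose Q = Q" and sR: "transpose R = R" and sH: "transpose H = H"
    and opt: "\<forall>u'. Fc N x0 A B Q R H lam u \<le> Fc N x0 A B Q R H lam u'"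
  shows "(\<Sum>t\<le>N. traj 0 A B v t \<bullet> (Q *v traj x0 A B u t))
               + (\<Sum>t<N. v t \<bullet> (R *v u t) + lam t * (v t \<bullet> (H *v u t))) \<le> 0"
  apply (rule foc_real)
  using opt[rule_format, of "\<lambda>j. u j - _ *\<^sub>R v j"] Fc_dir[OF sQ sR sH] by fastforce




lemma cs_real:
  fixes F G P :: real
  assumes h: "\<forall>r. 0 \<le> F - 2*r*P + r^2*G" and F: "F \<ge> 0" and G: "G \<ge> 0"
  shows "P \<le> sqrt F * sqrt G"
proof (cases "G = 0")
  case True
  have "P \<le> 0"
  proof (rule ccontr)
    assume "\<not> P \<le> 0"
    then have P: "P > 0" by simp
    have "0 \<le> F - 2*(F/P + 1)*P" using h True by (metis add_0_right mult_zero_right)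
    moreover have "2*(F/P + 1)*P = 2*F + 2*P" using P by (simp add: algebra_simps)
    ultimately show False using P F by linarith
  qed
  then show ?thesis using F G by (simp add: order_trans[OF _ mult_nonneg_nonneg])
next
  case False
  then have G: "G > 0" using G by simp
  have "0 \<le> F - 2*(P/G)*P + (P/G)^2*G" using h by blast
  also have "F - 2*(P/G)*P + (P/G)^2*G = F - P^2/G" using G by (simp add: power2_eq_square field_simps)
  finally have "P^2 \<le> F * G" using G by (simp add: field_simps)
  then have "sqrt (P^2) \<le> sqrt (F*G)" by (rule real_sqrt_le_mono)
  then show ?thesis by (simp add: real_sqrt_mult)
qed

lemma cs_sum:
  assumes fin: "finite T" and sQ: "transpose Q = Q" and pQ: "\<forall>x. 0 \<le> qf Q x"
  shows "(\<Sum>t\<in>T. f t \<bullet> (Q *v g t)) \<le> sqrt (\<Sum>t\<in>T. qf Q (f t)) * sqrt (\<Sum>t\<in>T. qf Q (g t))"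
proof (rule cs_real)
  show "\<forall>r. 0 \<le> (\<Sum>t\<in>T. qf Q (f t)) - 2 * r * (\<Sum>t\<in>T. f t \<bullet> (Q *v g t)) + r\<^sup>2 * (\<Sum>t\<in>T. qf Q (g t))"
  proof
    fix r :: real
    have "0 \<le> (\<Sum>t\<in>T. qf Q (f t - r *\<^sub>R g t))" using pQ by (simp add: sum_nonneg)
    also have "\<dots> = (\<Sum>t\<in>T. qf Q (f t)) - 2 * r * (\<Sum>t\<in>T. f t \<bullet> (Q *v g t)) + r\<^sup>2 * (\<Sum>t\<in>T. qf Q (g t))"
      unfolding qf_diff[OF sQ] using sym_inner[OF sQ]
      by (simp add: sum.distrib sum_subtractf sum_distrib_left)
    finally show "0 \<le> (\<Sum>t\<in>T. qf Q (f t)) - 2 * r * (\<Sum>t\<in>T. f t \<bullet> (Q *v g t)) + r\<^sup>2 * (\<Sum>t\<in>T. qf Q (g t))" .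
  qed
qed (use pQ in \<open>simp_all add: sum_nonneg\<close>)

lemma core_real:
  fixes c s a b :: real
  assumes "c \<le> s*b" "c \<le> s*a - s^2" "s \<ge> 0" "a \<ge> 0" "b \<ge> 0"
  shows "c \<le> a*b"
proof (cases "s \<le> a")
  case True then show ?thesis using assms by (smt (verit) mult_right_mono)
next
  case False
  then have "s*a - s^2 = s*(a - s)" by (simp add: power2_eq_square algebra_simps)
  moreover have "s*(a-s) \<le> 0" using False assms(3) by (simp add: mult_nonneg_nonpos)
  ultimately show ?thesis using assms by (smt (verit) mult_nonneg_nonneg)
qed




lemma sum_delta_lt: "k < (N::nat) \<Longrightarrow> (\<Sum>t<N. if t = k then X else (0::real)) = X"
  using sum.delta[of "{..<N}" k "\<lambda>_. X"] by simp

lemma agent_core: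
  fixes u :: "nat \<Rightarrow> real^'m" and x0 :: "real^'d"
  assumes sQ: "transpose Q = Q" and sR: "transpose R = R" and sH: "transpose H = H"
    and pQ: "\<forall>x. 0 \<le> qf Q x" and pR: "\<forall>v. 0 \<le> qf R v" and pH: "\<forall>v. 0 \<le> qf H v"
    and opt: "\<forall>u'. Fc N x0 A B Q R H lam u \<le> Fc N x0 A B Q R H lam u'"
    and k: "k < N" and lamnn: "\<forall>j<N. lam j \<ge> 0"
  shows "qf R (u k) + lam k * qf H (u k) \<le>
     sqrt (\<Sum>t\<in>{Suc k..N}. qf Q (traj x0 A B (\<lambda>j. if j < k then u j else 0) t))
   * sqrt (\<Sum>t\<in>{Suc k..N}. qf Q (traj 0 A B (\<lambda>j. if j = k then u k else 0) t))"
proof -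
  define v0 where "v0 = (\<lambda>j. if j < k then u j else 0)"
  define v1 where "v1 = (\<lambda>j. if j = k then u k else 0)"
  define v2 where "v2 = (\<lambda>j. if k < j then u j else 0)"
  define x where "x = traj x0 A B u"
  define y where "y = traj x0 A B v0"
  define z where "z = traj 0 A B v1"
  define w where "w = traj 0 A B v2"
  define T where "T = {Suc k..N}"
  define c where "c = qf R (u k) + lam k * qf H (u k)"
  have uu: "u = (\<lambda>j. v0 j + (v1 j + v2 j))"
    unfolding v0_def v1_def v2_def by (rule ext) auto
  have xdec: "x t = y t + z t + w t" for t
  proof -
    have "x t = traj (x0 + 0) A B (\<lambda>j. v0 j + (v1 j + v2 j)) t" unfolding x_def using uu by simp
    also have "\<dots> = y t + traj 0 A B (\<lambda>j. v1 j + v2 j) t" unfolding y_def by (rule traj_add)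
    also have "\<dots> = y t + z t + w t" unfolding z_def w_def using traj_add[of 0 0] by simp
    finally show ?thesis .
  qed
  have z0: "z t = 0" if "t \<le> k" for t unfolding z_def using that by (intro traj_zero) (auto simp: v1_def)
  have w0: "w t = 0" if "t \<le> k" for t unfolding w_def using that by (intro traj_zero) (auto simp: v2_def)
  have finT: "finite T" and subT: "T \<subseteq> {..N}" unfolding T_def by auto
  have f1: "(\<Sum>t\<le>N. z t \<bullet> (Q *v x t)) + c \<le> 0"
  proof -
    have "(\<Sum>t<N. v1 t \<bullet> (R *v u t) + lam t * (v1 t \<bullet> (H *v u t)))
         = (\<Sum>t<N. if t = k then c else 0)"
      by (rule sum.cong) (auto simp: v1_def c_def qf_def)
    also have "\<dots> = c" using k by (rule sum_delta_lt)
    finally show ?thesis using dir_foc[OF sQ sR sH opt, of v1] unfolding z_def x_def by simp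
  qed
  have f2: "(\<Sum>t\<le>N. w t \<bullet> (Q *v x t)) \<le> 0"
  proof -
    have "(\<Sum>t<N. v2 t \<bullet> (R *v u t) + lam t * (v2 t \<bullet> (H *v u t))) \<ge> 0"
      using pR pH lamnn by (auto simp: v2_def qf_def intro!: sum_nonneg)
    then show ?thesis using dir_foc[OF sQ sR sH opt, of v2] unfolding w_def x_def by simp
  qed
  have r1: "(\<Sum>t\<le>N. z t \<bullet> (Q *v x t)) = (\<Sum>t\<in>T. z t \<bullet> (Q *v x t))"
    by (rule sum.mono_neutral_right) (use subT z0 T_def in auto)
  have r2: "(\<Sum>t\<le>N. w t \<bullet> (Q *v x t)) = (\<Sum>t\<in>T. w t \<bullet> (Q *v x t))"
    by (rule sum.mono_neutral_right) (use subT w0 T_def in auto)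
  define X where "X = (\<Sum>t\<in>T. qf Q (x t))"
  define Y where "Y = (\<Sum>t\<in>T. qf Q (y t))"
  define Z where "Z = (\<Sum>t\<in>T. qf Q (z t))"
  have X0: "X \<ge> 0" "Y \<ge> 0" "Z \<ge> 0" unfolding X_def Y_def Z_def using pQ by (auto intro: sum_nonneg)
  have split: "(\<Sum>t\<in>T. z t \<bullet> (Q *v x t)) = X - (\<Sum>t\<in>T. x t \<bullet> (Q *v y t)) - (\<Sum>t\<in>T. w t \<bullet> (Q *v x t))"
  proof -
    have "z t \<bullet> (Q *v x t) = qf Q (x t) - x t \<bullet> (Q *v y t) - w t \<bullet> (Q *v x t)" for t
    proof -
      have "qf Q (x t) = x t \<bullet> (Q *v y t) + x t \<bullet> (Q *v z t) + x t \<bullet> (Q *v w t)"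
        unfolding qf_def by (subst (2) xdec) (simp add: matrix_vector_right_distrib inner_add_right)
      then show ?thesis using sym_inner[OF sQ, of "x t" "z t"] sym_inner[OF sQ, of "x t" "w t"] by simp
    qed
    then show ?thesis unfolding X_def by (simp add: sum_subtractf)
  qed
  have c1: "c \<le> sqrt X * sqrt Z"
  proof -
    have "c \<le> (\<Sum>t\<in>T. x t \<bullet> (Q *v (- z t)))"
      using f1 r1 sym_inner[OF sQ] by (simp add: sum_negf vec.neg)
    also have "\<dots> \<le> sqrt X * sqrt (\<Sum>t\<in>T. qf Q (- z t))"
      unfolding X_def by (rule cs_sum[OF finT sQ pQ])
    also have "(\<Sum>t\<in>T. qf Q (- z t)) = Z" unfolding Z_def qf_def by (simp add: vec.neg)
    finally show ?thesis .
  qed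
  have c2: "c \<le> sqrt X * sqrt Y - X"
  proof -
    have "c \<le> - X + (\<Sum>t\<in>T. x t \<bullet> (Q *v y t)) + (\<Sum>t\<in>T. w t \<bullet> (Q *v x t))"
      using f1 r1 split by linarith
    also have "\<dots> \<le> - X + (\<Sum>t\<in>T. x t \<bullet> (Q *v y t))" using f2 r2 by linarith
    also have "(\<Sum>t\<in>T. x t \<bullet> (Q *v y t)) \<le> sqrt X * sqrt Y"
      unfolding X_def Y_def by (rule cs_sum[OF finT sQ pQ])
    finally show ?thesis by linarith
  qed
  have "c \<le> sqrt Y * sqrt Z"
    by (rule core_real[where s = "sqrt X"]) (use c1 c2 X0 in \<open>auto simp: real_sqrt_pow2\<close>)
  then show ?thesis unfolding c_def Y_def Z_def y_def z_def v0_def v1_def T_def .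
qed




lemma mv_norm: "mat_opnorm M \<le> c \<Longrightarrow> norm (M *v v) \<le> c * norm v"
proof -
  assume h: "mat_opnorm M \<le> c"
  have "norm (M *v v) \<le> onorm ((*v) M) * norm v"
    using onorm[OF matrix_vector_mul_bounded_linear] by blast
  also have "onorm ((*v) M) = mat_opnorm M" unfolding mat_opnorm_def by simp
  also have "mat_opnorm M * norm v \<le> c * norm v" using h by (simp add: mult_right_mono)
  finally show ?thesis .
qed

lemma qf_le: "mat_opnorm Q \<le> d \<Longrightarrow> qf Q v \<le> d * (norm v)^2"
proof -
  assume h: "mat_opnorm Q \<le> d"
  have "qf Q v \<le> norm v * norm (Q *v v)" unfolding qf_def
    by (smt (verit) norm_cauchy_schwarz)
  also have "\<dots> \<le> norm v * (d * norm v)" by (rule mult_left_mono[OF mv_norm[OF h]]) simp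
  finally show ?thesis by (simp add: power2_eq_square algebra_simps)
qed

lemma y_bound:
  assumes A: "mat_opnorm A \<le> al" and al: "al \<ge> 0" and v: "\<forall>j\<ge>k. v j = 0"
  shows "norm (traj x0 A B v (k + s)) \<le> al^s * norm (traj x0 A B v k)"
proof (induction s)
  case 0 then show ?case by simp
next
  case (Suc s)
  have "norm (traj x0 A B v (k + Suc s)) = norm (A *v traj x0 A B v (k + s))" using v by simp
  also have "\<dots> \<le> al * norm (traj x0 A B v (k + s))" by (rule mv_norm[OF A])
  also have "\<dots> \<le> al * (al^s * norm (traj x0 A B v k))" by (rule mult_left_mono[OF Suc al])
  finally show ?case by simp
qed

lemma z_bound:
  assumes A: "mat_opnorm A \<le> al" and al: "al \<ge> 0" and Bb: "mat_opnorm B \<le> be"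
  shows "norm (traj 0 A B (\<lambda>j. if j = k then uk else 0) (Suc k + s)) \<le> al^s * (be * norm uk)"
proof (induction s)
  case 0
  have "traj 0 A B (\<lambda>j. if j = k then uk else 0) k = 0" by (rule traj_zero) auto
  then show ?case using mv_norm[OF Bb, of uk] by simp
next
  case (Suc s)
  have "norm (traj 0 A B (\<lambda>j. if j = k then uk else 0) (Suc k + Suc s))
     = norm (A *v traj 0 A B (\<lambda>j. if j = k then uk else 0) (Suc k + s))" by simp
  also have "\<dots> \<le> al * norm (traj 0 A B (\<lambda>j. if j = k then uk else 0) (Suc k + s))" by (rule mv_norm[OF A])
  also have "\<dots> \<le> al * (al^s * (be * norm uk))" by (rule mult_left_mono[OF Suc al])
  finally show ?case by simp
qed

lemma exp1: "Suc k \<le> t \<Longrightarrow> ((al::real)^(t-k))^2 = al * al^(2*t-2*k-1)"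
proof -
  assume "Suc k \<le> t"
  then have "(t-k)*2 = Suc (2*t-2*k-1)" by arith
  then show ?thesis by (metis power_mult power_Suc)
qed

lemma exp2: "Suc k \<le> t \<Longrightarrow> al * ((al::real)^(t-Suc k))^2 = al^(2*t-2*k-1)"
proof -
  assume "Suc k \<le> t"
  then have "Suc ((t-Suc k)*2) = 2*t-2*k-1" by arith
  then show ?thesis by (metis power_mult power_Suc)
qed

lemma agent_bound:
  fixes u :: "nat \<Rightarrow> real^'m" and x0 :: "real^'d"
  assumes sQ: "transpose Q = Q" and sR: "transpose R = R" and sH: "transpose H = H"
    and pQ: "\<forall>x. 0 \<le> qf Q x" and pR: "\<forall>v. 0 \<le> qf R v" and pH: "\<forall>v. 0 \<le> qf H v"
    and opt: "\<forall>u'. Fc N x0 A B Q R H lam u \<le> Fc N x0 A B Q R H lam u'"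
    and k: "k < N" and lamnn: "\<forall>j<N. lam j \<ge> 0"
    and A: "mat_opnorm A \<le> al" and al: "al > 0" and Bb: "mat_opnorm B \<le> be" and be: "be \<ge> 0"
    and Qd: "mat_opnorm Q \<le> d" and d: "d \<ge> 0"
  shows "qf R (u k) + lam k * qf H (u k) \<le>
     d * be * norm (u k) * norm (traj x0 A B u k) * (\<Sum>t\<in>{Suc k..N}. al^(2*t-2*k-1))"
proof -
  define T where "T = {Suc k..N}"
  define S where "S = (\<Sum>t\<in>T. al^(2*t-2*k-1))"
  define nx where "nx = norm (traj x0 A B u k)"
  define nu where "nu = norm (u k)"
  define Y where "Y = (\<Sum>t\<in>T. qf Q (traj x0 A B (\<lambda>j. if j < k then u j else 0) t))"
  define Z where "Z = (\<Sum>t\<in>T. qf Q (traj 0 A B (\<lambda>j. if j = k then u k else 0) t))"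
  have core: "qf R (u k) + lam k * qf H (u k) \<le> sqrt Y * sqrt Z"
    using agent_core[OF sQ sR sH pQ pR pH opt k lamnn] unfolding Y_def Z_def T_def .
  have Y0: "Y \<ge> 0" and Z0: "Z \<ge> 0" unfolding Y_def Z_def using pQ by (auto intro: sum_nonneg)
  have xk: "traj x0 A B (\<lambda>j. if j < k then u j else 0) k = traj x0 A B u k"
    by (rule traj_cong) auto
  have Yb: "Y \<le> d * nx^2 * al * S"
  proof -
    have "Y \<le> (\<Sum>t\<in>T. d * (al^(t-k) * nx)^2)"
      unfolding Y_def
    proof (rule sum_mono)
      fix t assume t: "t \<in> T"
      then have tk: "t = k + (t - k)" unfolding T_def by auto
      have "norm (traj x0 A B (\<lambda>j. if j < k then u j else 0) (k + (t-k)))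
          \<le> al^(t-k) * norm (traj x0 A B (\<lambda>j. if j < k then u j else 0) k)"
        by (rule y_bound[OF A]) (use al in auto)
      then have "norm (traj x0 A B (\<lambda>j. if j < k then u j else 0) t) \<le> al^(t-k) * nx"
        using tk xk unfolding nx_def by simp
      then have "(norm (traj x0 A B (\<lambda>j. if j < k then u j else 0) t))^2 \<le> (al^(t-k) * nx)^2"
        by (intro power_mono) auto
      then show "qf Q (traj x0 A B (\<lambda>j. if j < k then u j else 0) t) \<le> d * (al^(t-k) * nx)^2"
        using qf_le[OF Qd] d by (smt (verit) mult_left_mono)
    qed
    also have "\<dots> = (\<Sum>t\<in>T. d * nx^2 * al * al^(2*t-2*k-1))"
      by (rule sum.cong) (auto simp: T_def power_mult_distrib exp1)
    also have "\<dots> = d * nx^2 * al * S" unfolding S_def by (simp add: sum_distrib_left)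
    finally show ?thesis .
  qed
  have Zb: "al * Z \<le> d * be^2 * nu^2 * S"
  proof -
    have "Z \<le> (\<Sum>t\<in>T. d * (al^(t-Suc k) * (be * nu))^2)"
      unfolding Z_def
    proof (rule sum_mono)
      fix t assume t: "t \<in> T"
      then have tk: "t = Suc k + (t - Suc k)" unfolding T_def by auto
      have "norm (traj 0 A B (\<lambda>j. if j = k then u k else 0) t) \<le> al^(t-Suc k) * (be * nu)"
        using z_bound[OF A _ Bb, where k=k and uk="u k" and s="t - Suc k"] al tk unfolding nu_def by auto
      then have "(norm (traj 0 A B (\<lambda>j. if j = k then u k else 0) t))^2 \<le> (al^(t-Suc k) * (be * nu))^2"
        by (intro power_mono) auto
      then show "qf Q (traj 0 A B (\<lambda>j. if j = k then u k else 0) t) \<le> d * (al^(t-Suc k) * (be * nu))^2"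
        using qf_le[OF Qd] d by (smt (verit) mult_left_mono)
    qed
    then have "al * Z \<le> al * (\<Sum>t\<in>T. d * (al^(t-Suc k) * (be * nu))^2)"
      using al by simp
    also have "\<dots> = (\<Sum>t\<in>T. d * be^2 * nu^2 * (al * (al^(t-Suc k))^2))"
      by (simp add: sum_distrib_left power_mult_distrib algebra_simps)
    also have "\<dots> = (\<Sum>t\<in>T. d * be^2 * nu^2 * al^(2*t-2*k-1))"
      by (rule sum.cong) (auto simp: T_def exp2)
    also have "\<dots> = d * be^2 * nu^2 * S" unfolding S_def by (simp add: sum_distrib_left)
    finally show ?thesis .
  qed
  have S0: "S \<ge> 0" unfolding S_def using al by (auto intro: sum_nonneg)
  have "Y * Z \<le> (d * nx^2 * al * S) * Z" using Yb Z0 by (rule mult_right_mono)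
  also have "\<dots> = (d * nx^2 * S) * (al * Z)" by simp
  also have "\<dots> \<le> (d * nx^2 * S) * (d * be^2 * nu^2 * S)"
    using Zb d S0 by (intro mult_left_mono) auto
  also have "\<dots> = (d * be * nu * nx * S)^2" by (simp add: power2_eq_square)
  finally have "sqrt (Y * Z) \<le> sqrt ((d * be * nu * nx * S)^2)" by (rule real_sqrt_le_mono)
  also have "\<dots> = d * be * nu * nx * S" using d be S0 unfolding nu_def nx_def by simp
  finally have "sqrt Y * sqrt Z \<le> d * be * nu * nx * S" by (simp add: real_sqrt_mult)
  then show ?thesis using core unfolding nu_def nx_def S_def T_def by simp
qed




lemma consump_qf: "consump H v = qf H v" unfolding consump_def qf_def ..

lemma pd_psd: "sym_pd M \<Longrightarrow> 0 \<le> qf M v"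
  unfolding sym_pd_def qf_def by (cases "v = 0") (auto simp: less_imp_le)

lemma pd_sym: "sym_pd M \<Longrightarrow> transpose M = M"
  unfolding sym_pd_def by simp

lemma x_bound:
  assumes x0: "norm x0 \<le> g" and A: "mat_opnorm A \<le> al" and al: "al \<ge> 0"
    and Bb: "mat_opnorm B \<le> be" and be: "be \<ge> 0"
    and us: "\<forall>j<t. norm (u j) \<le> s j"
  shows "norm (traj x0 A B u t) \<le> g * al^t + be * (\<Sum>j<t. al^(t-1-j) * s j)"
  using us
proof (induction t)
  case 0 then show ?case using x0 by simp
next
  case (Suc t)
  have IH: "norm (traj x0 A B u t) \<le> g * al^t + be * (\<Sum>j<t. al^(t-1-j) * s j)"
    using Suc by auto
  have st: "norm (u t) \<le> s t" using Suc.prems by auto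
  have "norm (traj x0 A B u (Suc t)) \<le> norm (A *v traj x0 A B u t) + norm (B *v u t)"
    by (simp add: norm_triangle_ineq)
  also have "\<dots> \<le> al * norm (traj x0 A B u t) + be * norm (u t)"
    using mv_norm[OF A] mv_norm[OF Bb] by (intro add_mono) auto
  also have "\<dots> \<le> al * (g * al^t + be * (\<Sum>j<t. al^(t-1-j) * s j)) + be * s t"
    using IH st al be by (intro add_mono mult_left_mono) auto
  also have "\<dots> = g * al^(Suc t) + be * ((\<Sum>j<t. al * al^(t-1-j) * s j) + s t)"
    by (simp add: sum_distrib_left algebra_simps)
  also have "(\<Sum>j<t. al * al^(t-1-j) * s j) = (\<Sum>j<t. al^(Suc t-1-j) * s j)"
  proof (rule sum.cong)
    fix j assume "j \<in> {..<t}"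
    then have "Suc (t-1-j) = Suc t - 1 - j" by auto
    then show "al * al^(t-1-j) * s j = al^(Suc t-1-j) * s j" by (metis power_Suc)
  qed simp
  also have "(\<Sum>j<t. al^(Suc t-1-j) * s j) + s t = (\<Sum>j<Suc t. al^(Suc t-1-j) * s j)"
    by simp
  finally show ?case .
qed

lemma combine:
  fixes al g be :: real
  shows "(\<Sum>t\<in>{Suc k..N}. al^(2*t-2*k-1)) * (g * al^k + be * (\<Sum>j<k. al^(k-1-j) * s j))
    = (\<Sum>t=k+1..N. g * al ^ (2*t - k - 1) + be * (\<Sum>j<k. s j * al ^ (2*t - j - k - 2)))"
proof -
  have "(\<Sum>t\<in>{Suc k..N}. al^(2*t-2*k-1)) * (g * al^k + be * (\<Sum>j<k. al^(k-1-j) * s j))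
      = (\<Sum>t\<in>{Suc k..N}. g * (al^(2*t-2*k-1) * al^k) + be * (\<Sum>j<k. s j * (al^(2*t-2*k-1) * al^(k-1-j))))"
    by (simp add: sum_distrib_left sum_distrib_right sum.distrib algebra_simps)
  also have "\<dots> = (\<Sum>t=k+1..N. g * al ^ (2*t - k - 1) + be * (\<Sum>j<k. s j * al ^ (2*t - j - k - 2)))"
  proof (rule sum.cong)
    fix t assume t: "t \<in> {k+1..N}"
    have e1: "al^(2*t-2*k-1) * al^k = al ^ (2*t - k - 1)"
      using t by (simp add: power_add[symmetric])
    have e2: "al^(2*t-2*k-1) * al^(k-1-j) = al ^ (2*t - j - k - 2)" if "j < k" for j
    proof -
      have "2*t-2*k-1 + (k-1-j) = 2*t - j - k - 2" using t that by auto
      then show ?thesis by (simp add: power_add[symmetric])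
    qed
    show "g * (al^(2*t-2*k-1) * al^k) + be * (\<Sum>j<k. s j * (al^(2*t-2*k-1) * al^(k-1-j)))
        = g * al ^ (2*t - k - 1) + be * (\<Sum>j<k. s j * al ^ (2*t - j - k - 2))"
      using e1 e2 by simp
  qed simp
  finally show ?thesis .
qed

lemma key_ineq:
  fixes nu h Ck rho :: real and n :: nat
  assumes "h \<ge> rho * nu^2" "h \<ge> Ck / n" "n \<ge> 1" "nu \<ge> 0" "Ck \<ge> 0" "rho \<ge> 0"
  shows "nu * sqrt (Ck * rho) / n \<le> h"
proof -
  have h0: "h \<ge> 0" using assms by (smt (verit) mult_nonneg_nonneg zero_le_power2)
  have "Ck \<le> n * h" using assms by (simp add: field_simps)
  have "nu * sqrt (Ck * rho) = sqrt (Ck * (rho * nu^2))"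
    using assms by (simp add: real_sqrt_mult)
  also have "\<dots> \<le> sqrt ((n * h) * h)"
    using assms \<open>Ck \<le> n * h\<close> h0 by (intro real_sqrt_le_mono mult_mono) auto
  also have "\<dots> = sqrt n * h" using h0 by (simp add: real_sqrt_mult)
  also have "\<dots> \<le> n * h"
  proof -
    have "real n \<le> real n * real n" using assms(3) by simp
    then have "sqrt (real n) \<le> sqrt (real n * real n)" by (rule real_sqrt_le_mono)
    then have "sqrt (real n) \<le> real n" by simp
    then show ?thesis using h0 by (simp add: mult_right_mono)
  qed
  finally show ?thesis using assms(3) by (simp add: field_simps)
qed




theorem theorem3:
  fixes n N :: nat
    and x0 :: "nat \<Rightarrow> real^'d"
    and A :: "nat \<Rightarrow> real^'d^'d"
    and B :: "nat \<Rightarrow> real^'m^'d"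
    and H :: "nat \<Rightarrow> real^'m^'m"
    and a :: "nat \<Rightarrow> nat \<Rightarrow> real"
    and gam alph bet rho lamdag deltamax :: real
    and Q :: "nat \<Rightarrow> real^'d^'d"
    and R :: "nat \<Rightarrow> real^'m^'m"
    and lam :: "nat \<Rightarrow> real"
    and U :: "nat \<Rightarrow> nat \<Rightarrow> real^'m"
    and E :: "nat \<Rightarrow> nat \<Rightarrow> real"
  defines "C \<equiv> (\<lambda>t. \<Sum>i<n. a i t)"
  assumes hN: "N \<ge> 1"
    and hpos: "gam > 0" "alph > 0" "bet > 0" "rho > 0"
    and hx0: "\<forall>i<n. norm (x0 i) \<le> gam"
    and hA: "\<forall>i<n. mat_opnorm (A i) \<le> alph"
    and hB: "\<forall>i<n. mat_opnorm (B i) \<le> bet"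
    and hHpd: "\<forall>i<n. sym_pd (H i)"
    and hHrho: "\<forall>i<n. \<forall>v. v \<bullet> (H i *v v) \<ge> rho * (v \<bullet> v)"
    and hC: "\<forall>t<N. C t > 0"
    and hlam: "lamdag > 0"
    and hdelta: "deltamax > 0"
    and hcond0: "deltamax * (\<Sum>t=1..N. gam * alph ^ (2*t - 1))
                   \<le> sqrt (C 0 * rho) / (real n * bet) * lamdag"
    and hcondk: "\<forall>k<N. k \<noteq> 0 \<longrightarrow>
          deltamax * (\<Sum>t=k+1..N. gam * alph ^ (2*t - k - 1)
              + bet * (\<Sum>j<k. sqrt (C j / rho) * alph ^ (2*t - j - k - 2)))
          \<le> sqrt (C k * rho) / (real n * bet) * lamdag"
    and hQ: "\<forall>i<n. sym_pd (Q i) \<and> mat_opnorm (Q i) \<le> deltamax"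
    and hR: "\<forall>i<n. sym_pd (R i)"
    and hCE: "competitive_equilibrium n N x0 A B Q R H a lam U E"
  shows "\<forall>t<N. lam t \<le> lamdag"
proof (rule ccontr)
  assume "\<not> (\<forall>t<N. lam t \<le> lamdag)"
  then obtain k where k: "k < N" and lk: "lam k > lamdag" by (auto simp: not_le)
  have feas: "\<forall>i<n. agent_feasible N (H i) (a i) (U i) (E i)"
    and opt: "\<forall>i<n. \<forall>u e. agent_feasible N (H i) (a i) u e \<longrightarrow>
           agent_obj N (x0 i) (A i) (B i) (Q i) (R i) lam u e
             \<le> agent_obj N (x0 i) (A i) (B i) (Q i) (R i) lam (U i) (E i)"
    and clear: "\<forall>t<N. (\<Sum>i<n. E i t) = 0"
    using hCE unfolding competitive_equilibrium_def by auto
  have Ck: "C k > 0" using hC k by auto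
  have n1: "n \<ge> 1"
  proof (rule ccontr)
    assume "\<not> n \<ge> 1" then have "n = 0" by simp
    then show False using Ck unfolding C_def by simp
  qed
  have lamnn: "\<forall>j<N. lam j \<ge> 0"
    using lam_nonneg[of N "H 0" "a 0" "U 0" "E 0" "x0 0" "A 0" "B 0" "Q 0" "R 0" lam] feas opt n1 by auto
  have lkpos: "lam k > 0" using lk hlam by linarith
  have hnn: "0 \<le> consump (H i) v" if "i < n" for i v
    using pd_psd[of "H i" v] hHpd that by (simp add: consump_qf)
  have hsum: "(\<Sum>i<n. consump (H i) (U i j)) \<le> C j" if "j < N" for j
  proof -
    have "0 = (\<Sum>i<n. E i j)" using clear that by simp
    also have "\<dots> \<le> (\<Sum>i<n. a i j - consump (H i) (U i j))"
      using feas that unfolding agent_feasible_def by (intro sum_mono) auto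
    finally show ?thesis unfolding C_def by (simp add: sum_subtractf)
  qed
  have ubound: "norm (U i j) \<le> sqrt (C j / rho)" if "i < n" "j < N" for i j
  proof -
    have "consump (H i) (U i j) \<le> (\<Sum>l<n. consump (H l) (U l j))"
      by (rule member_le_sum) (use that hnn in auto)
    also have "\<dots> \<le> C j" by (rule hsum[OF that(2)])
    finally have c1: "consump (H i) (U i j) \<le> C j" .
    have "rho * (U i j \<bullet> U i j) \<le> consump (H i) (U i j)"
      using hHrho that unfolding consump_def by auto
    then have "rho * (norm (U i j))^2 \<le> C j" using c1 by (simp add: power2_norm_eq_inner)
    then have "(norm (U i j))^2 \<le> C j / rho" using hpos by (simp add: field_simps)
    then show ?thesis by (simp add: real_le_rsqrt)
  qed
  have tight: "E i k = a i k - consump (H i) (U i k)" if "i < n" for i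
    using slack_tight[of N "H i" "a i" "U i" "E i" "x0 i" "A i" "B i" "Q i" "R i" lam k] feas opt that k lkpos
    by auto
  have hk: "(\<Sum>i<n. consump (H i) (U i k)) = C k"
  proof -
    have "0 = (\<Sum>i<n. E i k)" using clear k by simp
    also have "\<dots> = (\<Sum>i<n. a i k - consump (H i) (U i k))" using tight by simp
    finally show ?thesis unfolding C_def by (simp add: sum_subtractf)
  qed
  obtain i where i: "i < n" and hi: "consump (H i) (U i k) \<ge> C k / n"
  proof (rule ccontr)
    assume "\<not> thesis"
    then have lt: "\<forall>i<n. consump (H i) (U i k) < C k / n" using that by (meson linorder_not_le)
    have "(\<Sum>i<n. consump (H i) (U i k)) < (\<Sum>i<n. C k / n)"
      using n1 lt by (intro sum_strict_mono) (auto simp: lessThan_empty_iff)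
    also have "\<dots> = C k" using n1 by simp
    finally show False using hk by simp
  qed
  define h where "h = consump (H i) (U i k)"
  define nu where "nu = norm (U i k)"
  define S where "S = (\<Sum>t\<in>{Suc k..N}. alph^(2*t-2*k-1))"
  define sj where "sj = (\<lambda>j. sqrt (C j / rho))"
  define Bk where "Bk = (\<Sum>t=k+1..N. gam * alph ^ (2*t - k - 1)
              + bet * (\<Sum>j<k. sqrt (C j / rho) * alph ^ (2*t - j - k - 2)))"
  have S0: "S \<ge> 0" unfolding S_def using hpos by (auto intro: sum_nonneg)
  have sQ: "transpose (Q i) = Q i" and sR: "transpose (R i) = R i" and sH: "transpose (H i) = H i"
    using hQ hR hHpd i pd_sym by auto
  have pQ: "\<forall>x. 0 \<le> qf (Q i) x" using hQ i pd_psd by blast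
  have pR: "\<forall>v. 0 \<le> qf (R i) v" using hR i pd_psd by blast
  have pH: "\<forall>v. 0 \<le> qf (H i) v" using hHpd i pd_psd by blast
  have optF: "\<forall>u'. Fc N (x0 i) (A i) (B i) (Q i) (R i) (H i) lam (U i) \<le> Fc N (x0 i) (A i) (B i) (Q i) (R i) (H i) lam u'"
    using opt_Fc[of N "H i" "a i" "U i" "E i" "x0 i" "A i" "B i" "Q i" "R i" lam] feas opt i by auto
  have ab: "qf (R i) (U i k) + lam k * qf (H i) (U i k) \<le>
     deltamax * bet * nu * norm (traj (x0 i) (A i) (B i) (U i) k) * S"
    unfolding nu_def S_def
    by (rule agent_bound[OF sQ sR sH pQ pR pH optF k lamnn])
       (use hA hB hQ i hpos hdelta in auto)
  have xk: "norm (traj (x0 i) (A i) (B i) (U i) k) \<le> gam * alph^k + bet * (\<Sum>j<k. alph^(k-1-j) * sj j)"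
    by (rule x_bound) (use hx0 hA hB i hpos ubound k sj_def in auto)
  have SB: "S * norm (traj (x0 i) (A i) (B i) (U i) k) \<le> Bk"
  proof -
    have "S * norm (traj (x0 i) (A i) (B i) (U i) k) \<le> S * (gam * alph^k + bet * (\<Sum>j<k. alph^(k-1-j) * sj j))"
      using xk S0 by (rule mult_left_mono)
    also have "\<dots> = Bk" unfolding S_def Bk_def sj_def by (rule combine)
    finally show ?thesis .
  qed
  have cond: "deltamax * Bk \<le> sqrt (C k * rho) / (real n * bet) * lamdag"
  proof (cases "k = 0")
    case True then show ?thesis using hcond0 unfolding Bk_def by simp
  next
    case False then show ?thesis using hcondk k unfolding Bk_def by auto
  qed
  have "lam k * h \<le> qf (R i) (U i k) + lam k * qf (H i) (U i k)"
    using pR unfolding h_def consump_qf by simp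
  also have "\<dots> \<le> (bet * nu) * (deltamax * (S * norm (traj (x0 i) (A i) (B i) (U i) k)))"
    using ab by (simp add: algebra_simps)
  also have "\<dots> \<le> (bet * nu) * (deltamax * Bk)"
    using SB hpos hdelta unfolding nu_def by (intro mult_left_mono) auto
  also have "\<dots> \<le> (bet * nu) * (sqrt (C k * rho) / (real n * bet) * lamdag)"
    using cond hpos unfolding nu_def by (intro mult_left_mono) auto
  also have "\<dots> = (nu * sqrt (C k * rho) / n) * lamdag" using hpos by (simp add: field_simps)
  also have "\<dots> \<le> h * lamdag"
  proof (rule mult_right_mono)
    show "nu * sqrt (C k * rho) / n \<le> h"
    proof (rule key_ineq)
      show "h \<ge> rho * nu^2" using hHrho i unfolding h_def nu_def consump_def
        by (simp add: power2_norm_eq_inner)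
      show "h \<ge> C k / n" using hi unfolding h_def .
    qed (use n1 Ck hpos nu_def in auto)
  qed (use hlam in simp)
  finally have "lam k * h \<le> h * lamdag" .
  moreover have "h > 0"
  proof -
    have "C k / n > 0" using Ck n1 by simp
    then show ?thesis using hi unfolding h_def by linarith
  qed
  ultimately have "lam k \<le> lamdag" by (simp add: mult.commute)
  then show False using lk by simp
qed


end
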